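(* Let $\mathbf q\in\mathbb Z_{\ge2}^n$. Then for every integer $m\ge2$, the simplex $\Delta_{(1,\mathrm{rs}(\mathbf q,m))}$ does not have the integer decomposition property.
   Context: For $\mathbf p=(p_1,\dots,p_N)\in\mathbb Z_{\ge1}^N$ (entries listed in weakly increasing order), let $\Delta_{(1,\mathbf p)}=\mathrm{conv}\{e_1,\dots,e_N,-\sum_{i=1}^N p_ie_i\}\subset\mathbb R^N$; $\Delta_{(1,\mathbf p)}$ is reflexive if and only if $p_i$ divides $1+\sum_j p_j$ for all $i$. For $\mathbf q\in\mathbb Z_{\ge1}^n$, let $\mathrm{lcm}(\mathbf q)$ be the least common multiple of its entries, and let $\mathrm{rsn}(\mathbf q)$ be the least integer $k\ge0$ such that the vector $(1^k,\mathbf q)$, obtained by prepending $k$ entries equal to $1$ to $\mathbf q$, gives a reflexive simplex. For $m\ge1$, $\mathrm{rs}(\mathbf q,m)=(1^{\mathrm{rsn}(\mathbf q)+(m-1)\mathrm{lcm}(\mathbf q)},\mathbf q)$. A lattice polytope $P\subset\mathbb R^N$ has the integer decomposition property if for every integer $m\ge1$, every point of $mP\cap\mathbb Z^N$ is a sum of $m$ points of $P\cap\mathbb Z^N$. *)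

theory Defs
  imports "HOL-Analysis.Analysis"
begin

text \<open>Points of R^N are represented as functions nat => real; the vector
  p = (p_1,...,p_N) is a list of length N, coordinates are 0-based
  (coordinate j of R^N is index j < N).\<close>

definition conv_fin :: "(nat \<Rightarrow> real) set \<Rightarrow> (nat \<Rightarrow> real) set" where
  "conv_fin V = {x. \<exists>c :: (nat \<Rightarrow> real) \<Rightarrow> real.
      (\<forall>v\<in>V. 0 \<le> c v) \<and> (\<Sum>v\<in>V. c v) = 1 \<and> x = (\<lambda>j. \<Sum>v\<in>V. c v * v j)}"

definition unit_vec :: "nat \<Rightarrow> nat \<Rightarrow> real" where
  "unit_vec i = (\<lambda>j. if j = i then 1 else 0)"

definition delta_simplex :: "nat list \<Rightarrow> (nat \<Rightarrow> real) set" where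
  "delta_simplex p = conv_fin
     ({unit_vec i | i. i < length p} \<union>
      {(\<lambda>j. if j < length p then - real (p ! j) else 0)})"

definition lattice_pt :: "(nat \<Rightarrow> real) \<Rightarrow> bool" where
  "lattice_pt x \<longleftrightarrow> (\<forall>j. x j \<in> \<int>)"

definition dilate :: "nat \<Rightarrow> (nat \<Rightarrow> real) set \<Rightarrow> (nat \<Rightarrow> real) set" where
  "dilate m P = (\<lambda>y. (\<lambda>j. real m * y j)) ` P"

definition IDP :: "(nat \<Rightarrow> real) set \<Rightarrow> bool" where
  "IDP P \<longleftrightarrow> (\<forall>m::nat. m \<ge> 1 \<longrightarrow> (\<forall>x \<in> dilate m P. lattice_pt x \<longrightarrow>
      (\<exists>ys :: nat \<Rightarrow> nat \<Rightarrow> real. (\<forall>i<m. ys i \<in> P \<and> lattice_pt (ys i)) \<and>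
          x = (\<lambda>j. \<Sum>i<m. ys i j))))"

text \<open>Reflexivity of Delta_(1,p), via the criterion stated in the paper's context:
  p_i divides 1 + sum_j p_j for all i.\<close>
definition reflexive_vec :: "nat list \<Rightarrow> bool" where
  "reflexive_vec p \<longleftrightarrow> (\<forall>i < length p. p ! i dvd 1 + sum_list p)"

definition lcm_list :: "nat list \<Rightarrow> nat" where
  "lcm_list q = Lcm (set q)"

definition rsn :: "nat list \<Rightarrow> nat" where
  "rsn q = (LEAST k. reflexive_vec (replicate k 1 @ q))"

definition rs :: "nat list \<Rightarrow> nat \<Rightarrow> nat list" where
  "rs q m = replicate (rsn q + (m - 1) * lcm_list q) 1 @ q"

end

theory Submission
  imports Defs
begin


lemma unit_vec_inj: "inj unit_vec"
  by (rule injI) (metis unit_vec_def zero_neq_one)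

lemma sum_unit: "(\<Sum>i<N. g i * unit_vec i j) = (if j < N then g j else (0::real))"
  by (simp add: unit_vec_def if_distrib sum.delta' cong: if_cong)

lemma sum_over_V:
  fixes f :: "(nat \<Rightarrow> real) \<Rightarrow> real" and p :: "nat list" and w
  defines "w \<equiv> (\<lambda>j. if j < length p then - real (p ! j) else 0)"
  shows "(\<Sum>v\<in>{unit_vec i | i. i < length p} \<union> {w}. f v) = f w + (\<Sum>i<length p. f (unit_vec i))"
proof -
  have U: "{unit_vec i | i. i < length p} = unit_vec ` {..<length p}" by auto
  have nw: "w \<notin> unit_vec ` {..<length p}"
  proof
    assume "w \<in> unit_vec ` {..<length p}"
    then obtain i where i: "i < length p" "w = unit_vec i" by auto
    then have "w i = 1" by (simp add: unit_vec_def)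
    moreover have "w i \<le> 0" using i(1) by (simp add: w_def)
    ultimately show False by simp
  qed
  have "(\<Sum>v\<in>{unit_vec i | i. i < length p} \<union> {w}. f v) = f w + (\<Sum>v\<in>unit_vec ` {..<length p}. f v)"
    using nw by (simp add: U)
  also have "(\<Sum>v\<in>unit_vec ` {..<length p}. f v) = (\<Sum>i<length p. f (unit_vec i))"
    by (rule sum.reindex_cong[where l=unit_vec]) (auto intro: inj_on_subset[OF unit_vec_inj])
  finally show ?thesis .
qed

lemma mem_delta:
  "x \<in> delta_simplex p \<longleftrightarrow> (\<exists>a \<mu>. (\<forall>i<length p. 0 \<le> a i) \<and> 0 \<le> \<mu> \<and> (\<Sum>i<length p. a i) + \<mu> = 1
      \<and> x = (\<lambda>j. if j < length p then a j - \<mu> * real (p!j) else 0))"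
  (is "?L \<longleftrightarrow> ?R")
proof
  define w where "w = (\<lambda>j. if j < length p then - real (p ! j) else 0)"
  assume ?L
  then obtain c where c: "\<forall>v\<in>{unit_vec i | i. i < length p} \<union> {w}. 0 \<le> c v"
     "(\<Sum>v\<in>{unit_vec i | i. i < length p} \<union> {w}. c v) = 1"
     "x = (\<lambda>j. \<Sum>v\<in>{unit_vec i | i. i < length p} \<union> {w}. c v * v j)"
    unfolding delta_simplex_def conv_fin_def w_def by blast
  show ?R
  proof (intro exI conjI allI impI)
    show "0 \<le> c (unit_vec i)" if "i < length p" for i using c(1) that by auto
    show "0 \<le> c w" using c(1) by auto
    show "(\<Sum>i<length p. c (unit_vec i)) + c w = 1" using c(2) sum_over_V[of c p] by (simp add: w_def)
    show "x = (\<lambda>j. if j < length p then c (unit_vec j) - c w * real (p ! j) else 0)"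
    proof
      fix j
      have "x j = c w * w j + (\<Sum>i<length p. c (unit_vec i) * unit_vec i j)"
        using c(3) sum_over_V[of "\<lambda>v. c v * v j" p] by (simp add: w_def)
      then show "x j = (if j < length p then c (unit_vec j) - c w * real (p ! j) else 0)"
        by (simp add: sum_unit w_def)
    qed
  qed
next
  define w where "w = (\<lambda>j. if j < length p then - real (p ! j) else 0)"
  assume ?R
  then obtain a \<mu> where a: "\<forall>i<length p. 0 \<le> a i" "0 \<le> \<mu>" "(\<Sum>i<length p. a i) + \<mu> = 1"
      "x = (\<lambda>j. if j < length p then a j - \<mu> * real (p!j) else 0)" by blast
  define c where "c v = (if v = w then \<mu> else a (inv_into {..<length p} unit_vec v))" for v
  have nw: "unit_vec i \<noteq> w" if "i < length p" for i
  proof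
    assume "unit_vec i = w"
    then have "unit_vec i i = w i" by simp
    with that show False by (simp add: unit_vec_def w_def)
  qed
  have cu: "c (unit_vec i) = a i" if "i < length p" for i
    using that nw[OF that] by (simp add: c_def inv_into_f_f inj_on_subset[OF unit_vec_inj])
  have cw: "c w = \<mu>" by (simp add: c_def)
  show ?L unfolding delta_simplex_def conv_fin_def
  proof (intro CollectI exI conjI ballI)
    fix v assume "v \<in> {unit_vec i |i. i < length p} \<union> {(\<lambda>j. if j < length p then - real (p ! j) else 0)}"
    then show "0 \<le> c v" using a cu cw w_def by auto
  next
    show "(\<Sum>v\<in>{unit_vec i |i. i < length p} \<union> {(\<lambda>j. if j < length p then - real (p ! j) else 0)}. c v) = 1"
      using sum_over_V[of c p] a(3) cu cw by (simp add: w_def[symmetric])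
  next
    show "x = (\<lambda>j. \<Sum>v\<in>{unit_vec i |i. i < length p} \<union> {(\<lambda>j. if j < length p then - real (p ! j) else 0)}. c v * v j)"
    proof
      fix j
      have "(\<Sum>v\<in>{unit_vec i |i. i < length p} \<union> {w}. c v * v j) = c w * w j + (\<Sum>i<length p. c (unit_vec i) * unit_vec i j)"
        using sum_over_V[of "\<lambda>v. c v * v j" p] by (simp add: w_def)
      also have "\<dots> = (if j < length p then a j - \<mu> * real (p!j) else 0)"
        using cu cw by (simp add: sum_unit w_def)
      finally show "x j = (\<Sum>v\<in>{unit_vec i |i. i < length p} \<union> {(\<lambda>j. if j < length p then - real (p ! j) else 0)}. c v * v j)"
        using a(4) by (simp add: w_def)
    qed
  qed
qed



lemma sum_lt_indicator: "k \<le> N \<Longrightarrow> (\<Sum>j<N. if j < k then c else 0) = real k * (c::real)"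
  by (induction N) (auto simp: less_Suc_eq le_Suc_eq algebra_simps)

lemma sum_skip: "(k::nat) < N \<Longrightarrow> (\<Sum>i<N. if i = k then 0 else f i) = (\<Sum>i<N. f i) - (f k :: real)"
proof -
  assume "k < N"
  have "(\<Sum>i<N. if i = k then 0 else f i) = (\<Sum>i<N. f i - (if i = k then f k else 0))"
    by (rule sum.cong) auto
  also have "\<dots> = (\<Sum>i<N. f i) - (\<Sum>i<N. if i = k then f k else 0)" by (rule sum_subtractf)
  also have "(\<Sum>i<N. if i = k then f k else 0) = f k" using \<open>k < N\<close> sum.delta[of "{..<N}" k "\<lambda>_. f k"] by simp
  finally show ?thesis .
qed

lemma nonIDP:
  fixes q :: "nat list" and k :: nat
  assumes qne: "q \<noteq> []" and Q2: "2 \<le> hd q" and Qk: "hd q \<le> k"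
    and Qdvd: "hd q dvd 1 + k + sum_list q"
  shows "\<not> IDP (delta_simplex (replicate k 1 @ q))"
proof -
  define p where "p = replicate k 1 @ q"
  define N where "N = length p"
  define Q where "Q = hd q"
  define S where "S = 1 + k + sum_list q"
  have N: "N = k + length q" by (simp add: N_def p_def)
  have kN: "k < N" using qne by (simp add: N)
  have pk: "p ! k = Q" using qne by (simp add: p_def Q_def nth_append hd_conv_nth)
  have p1: "j < k \<Longrightarrow> p ! j = 1" for j by (simp add: p_def nth_append)
  have sump: "(\<Sum>j<N. real (p ! j)) = real k + real (sum_list q)"
  proof -
    have "(\<Sum>j<N. real (p ! j)) = real (\<Sum>j<N. p ! j)" by simp
    also have "(\<Sum>j<N. p ! j) = sum_list p" by (simp add: N_def sum_list_sum_nth atLeast0LessThan)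
    finally show ?thesis by (simp add: p_def sum_list_replicate)
  qed
  have Qpos: "Q \<ge> 2" using Q2 by (simp add: Q_def)
  have "Q \<le> sum_list q" using qne by (simp add: Q_def member_le_sum_list)
  then have SQ: "Q < S" by (simp add: S_def)
  obtain d where d: "S = Q * d" using Qdvd by (auto simp: S_def Q_def)
  have d2: "d \<ge> 2"
  proof (rule ccontr)
    assume "\<not> 2 \<le> d"
    then have "d \<le> 1" by simp
    then have "Q * d \<le> Q" by (simp add: mult_le_cancel1)
    with SQ d show False by simp
  qed
  define c where "c = d - 1"
  have c1: "c \<ge> 1" and dc: "d = c + 1" using d2 by (auto simp: c_def)
  have Sr: "real S = (real c + 1) * real Q" using d dc by (simp add: algebra_simps)
  have Sr2: "real S = 1 + real k + real (sum_list q)" by (simp add: S_def)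
  have Qr: "real Q \<ge> 2" using Qpos by simp
  define x where "x = (\<lambda>j::nat. if j = k then (-1::real) else 0)"
  have xlat: "lattice_pt x" by (simp add: lattice_pt_def x_def)
  have xmem: "x \<in> dilate c (delta_simplex p)"
  proof -
    define z where "z = (\<lambda>j::nat. if j = k then -1 / real c else 0)"
    have cpos: "real c > 0" using c1 by simp
    have zmem: "z \<in> delta_simplex p"
      unfolding mem_delta N_def[symmetric]
    proof (intro exI conjI allI impI)
      show "0 \<le> (if i = k then 0 else real (p ! i) / (real c * real Q))" for i
        using cpos by simp
      show "0 \<le> 1 / (real c * real Q)" using cpos by simp
      have "(\<Sum>i<N. if i = k then 0 else real (p ! i) / (real c * real Q))
           = (\<Sum>i<N. real (p ! i) / (real c * real Q)) - real Q / (real c * real Q)"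
        using sum_skip[OF kN, of "\<lambda>i. real (p ! i) / (real c * real Q)"] pk by simp
      also have "\<dots> = (real k + real (sum_list q) - real Q) / (real c * real Q)"
        by (simp add: sum_divide_distrib[symmetric] sump diff_divide_distrib)
      finally show "(\<Sum>i<N. if i = k then 0 else real (p ! i) / (real c * real Q)) + 1 / (real c * real Q) = 1"
        using Sr Sr2 cpos Qr by (simp add: field_simps)
      show "z = (\<lambda>j. if j < N then (if j = k then 0 else real (p ! j) / (real c * real Q)) - 1 / (real c * real Q) * real (p ! j) else 0)"
        using kN pk cpos Qr by (auto simp: z_def fun_eq_iff)
    qed
    have "x = (\<lambda>j. real c * z j)" using cpos by (auto simp: x_def z_def fun_eq_iff)
    then show ?thesis using zmem by (auto simp: dilate_def)
  qed
  show ?thesis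
  proof
    assume "IDP (delta_simplex (replicate k 1 @ q))"
    then have "IDP (delta_simplex p)" by (simp add: p_def)
    from this[unfolded IDP_def, rule_format, OF c1 xmem xlat]
    obtain ys where ys: "\<forall>i<c. ys i \<in> delta_simplex p \<and> lattice_pt (ys i)"
      and xs: "x = (\<lambda>j. \<Sum>i<c. ys i j)" by blast
    have "\<forall>s. \<exists>a\<mu>::(nat\<Rightarrow>real)\<times>real. s < c \<longrightarrow> ((\<forall>i<N. 0 \<le> fst a\<mu> i) \<and> 0 \<le> snd a\<mu> \<and> (\<Sum>i<N. fst a\<mu> i) + snd a\<mu> = 1
      \<and> ys s = (\<lambda>j. if j < N then fst a\<mu> j - snd a\<mu> * real (p!j) else 0))"
    proof
      fix s
      show "\<exists>a\<mu>::(nat\<Rightarrow>real)\<times>real. s < c \<longrightarrow> ((\<forall>i<N. 0 \<le> fst a\<mu> i) \<and> 0 \<le> snd a\<mu> \<and> (\<Sum>i<N. fst a\<mu> i) + snd a\<mu> = 1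
      \<and> ys s = (\<lambda>j. if j < N then fst a\<mu> j - snd a\<mu> * real (p!j) else 0))"
      proof (cases "s < c")
        case True
        then have "ys s \<in> delta_simplex p" using ys by blast
        then obtain a \<mu> where "(\<forall>i<N. 0 \<le> a i) \<and> 0 \<le> \<mu> \<and> (\<Sum>i<N. a i) + \<mu> = 1
          \<and> ys s = (\<lambda>j. if j < N then a j - \<mu> * real (p!j) else 0)"
          unfolding mem_delta N_def by blast
        then show ?thesis by (intro exI[of _ "(a, \<mu>)"]) (simp only: fst_conv snd_conv, blast)
      qed simp
    qed
    then obtain F where F: "\<forall>s. s < c \<longrightarrow> ((\<forall>i<N. 0 \<le> fst (F s) i) \<and> 0 \<le> snd (F s) \<and> (\<Sum>i<N. fst (F s) i) + snd (F s) = 1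
      \<and> ys s = (\<lambda>j. if j < N then fst (F s) j - snd (F s) * real (p!j) else 0))"
      by (rule choice[THEN exE])
    define A where "A s = fst (F s)" for s
    define M where "M s = snd (F s)" for s
    have AM: "\<And>s. s < c \<Longrightarrow> (\<forall>i<N. 0 \<le> A s i) \<and> 0 \<le> M s \<and> (\<Sum>i<N. A s i) + M s = 1
      \<and> ys s = (\<lambda>j. if j < N then A s j - M s * real (p!j) else 0)"
      using F unfolding A_def M_def by blast
    have int: "s < c \<Longrightarrow> ys s j \<in> \<int>" for s j using ys by (simp add: lattice_pt_def)
    have lb: "s < c \<Longrightarrow> j < N \<Longrightarrow> ys s j \<ge> - M s * real (p ! j)" for s j
      using AM[of s] by auto
    have Mnn: "s < c \<Longrightarrow> M s \<ge> 0" for s using AM by blast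
    have rowsum: "s < c \<Longrightarrow> (\<Sum>j<N. ys s j) = 1 - M s * real S" for s
    proof -
      assume s: "s < c"
      have "(\<Sum>j<N. ys s j) = (\<Sum>j<N. A s j - M s * real (p!j))"
        using AM[OF s] by simp
      also have "\<dots> = (\<Sum>j<N. A s j) - M s * (\<Sum>j<N. real (p!j))"
        by (simp add: sum_subtractf sum_distrib_left)
      also have "\<dots> = 1 - M s * real S" using AM[OF s] sump Sr2 by (simp add: algebra_simps)
      finally show ?thesis .
    qed
    have "(\<Sum>j<N. x j) = -1" using kN by (simp add: x_def)
    also have "(\<Sum>j<N. x j) = (\<Sum>s<c. \<Sum>j<N. ys s j)" by (simp add: xs sum.swap[of _ "{..<N}"])
    also have "\<dots> = (\<Sum>s<c. 1 - M s * real S)" by (rule sum.cong) (auto simp: rowsum)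
    also have "\<dots> = real c - real S * (\<Sum>s<c. M s)" by (simp add: sum_subtractf sum_distrib_left mult.commute)
    finally have "real S * (\<Sum>s<c. M s) = real c + 1" by simp
    then have "(real c + 1) * (real Q * (\<Sum>s<c. M s)) = (real c + 1) * 1" using Sr
      by (simp add: algebra_simps)
    then have "real Q * (\<Sum>s<c. M s) = 1" by (simp add: add_pos_pos)
    then have sumM: "(\<Sum>s<c. M s) = 1 / real Q" using Qr by (simp add: field_simps)
    have Mle: "s < c \<Longrightarrow> M s \<le> 1 / real Q" for s
      using member_le_sum[of s "{..<c}" M] Mnn sumM by auto
    have "x k = -1" by (simp add: x_def)
    then have sk: "(\<Sum>s<c. ys s k) = -1" using xs by simp
    have "\<exists>s0<c. ys s0 k < 0"
    proof (rule ccontr)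
      assume "\<not> (\<exists>s0<c. ys s0 k < 0)"
      then have "(\<Sum>s<c. ys s k) \<ge> 0" by (intro sum_nonneg) (metis lessThan_iff not_less)
      with sk show False by simp
    qed
    then obtain s0 where s0: "s0 < c" "ys s0 k < 0" by blast
    have "ys s0 k \<le> -1"
    proof -
      obtain z where z: "ys s0 k = of_int z" using int[OF s0(1)] Ints_cases by blast
      then have "z < 0" using s0(2) by simp
      then have "z \<le> -1" by simp
      then show ?thesis using z by simp
    qed
    moreover have "ys s0 k \<ge> - M s0 * real Q" using lb[OF s0(1) kN] pk by simp
    ultimately have "M s0 * real Q \<ge> 1" by simp
    then have M0: "M s0 = 1 / real Q" using Mle[OF s0(1)] Qr by (simp add: field_simps)
    have bnd: "ys s0 j \<ge> (if j < k then 1 / real Q else 0) - real (p ! j) / real Q" if j: "j < N" for j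
    proof (cases "j < k")
      case True
      have "ys s0 j \<ge> - 1 / real Q" using lb[OF s0(1) j] p1[OF True] M0 by simp
      moreover have "- 1 / real Q > -1" using Qr by simp
      ultimately have "ys s0 j > -1" by linarith
      then have "ys s0 j \<ge> 0"
      proof -
        obtain z where z: "ys s0 j = of_int z" using int[OF s0(1)] Ints_cases by blast
        then have "z > -1" using \<open>ys s0 j > -1\<close> by simp
        then have "z \<ge> 0" by simp
        then show ?thesis using z by simp
      qed
      then show ?thesis using True p1[OF True] by simp
    next
      case False
      then show ?thesis using lb[OF s0(1) j] M0 by simp
    qed
    have "(\<Sum>j<N. ys s0 j) \<ge> (\<Sum>j<N. (if j < k then 1 / real Q else 0) - real (p ! j) / real Q)"
      by (rule sum_mono) (use bnd in auto)
    also have "(\<Sum>j<N. (if j < k then 1 / real Q else 0) - real (p ! j) / real Q)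
        = real k / real Q - (real k + real (sum_list q)) / real Q"
      using kN by (simp add: sum_subtractf sum_lt_indicator sum_divide_distrib[symmetric] sump)
    finally have "1 - real S / real Q \<ge> real k / real Q - (real k + real (sum_list q)) / real Q"
      using rowsum[OF s0(1)] M0 by simp
    then have "real Q - real S \<ge> real k - (real k + real (sum_list q))" using Qr
      by (simp add: field_simps)
    then have "real Q \<ge> 1 + real k" using Sr2 by simp
    then show False using Qk by (simp add: Q_def)
  qed
qed



theorem theorem5p4:
  fixes q :: "nat list" and m :: nat
  assumes "q \<noteq> []"
    and "\<forall>x \<in> set q. 2 \<le> x"
    and "2 \<le> m"
  shows "\<not> IDP (delta_simplex (rs q m))"
proof -
  define L where "L = lcm_list q"
  define T where "T = 1 + sum_list q"
  have hdin: "hd q \<in> set q" using assms(1) by simp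
  have hd2: "2 \<le> hd q" using assms(2) hdin by blast
  have dvdL: "x \<in> set q \<Longrightarrow> x dvd L" for x by (simp add: L_def lcm_list_def dvd_Lcm)
  have L0: "L \<noteq> 0" using assms(2) by (auto simp: L_def lcm_list_def Lcm_0_iff_nat)
  have hdL: "hd q \<le> L" using dvdL[OF hdin] L0 by (simp add: dvd_imp_le)
  have Lpos: "L \<ge> 1" using L0 by simp
  define k0 where "k0 = L * T - T"
  have k0T: "1 + k0 + sum_list q = L * T"
  proof -
    have "T \<le> L * T" using Lpos by simp
    then show ?thesis by (simp add: k0_def T_def)
  qed
  have ex: "reflexive_vec (replicate k0 1 @ q)"
    unfolding reflexive_vec_def
  proof (intro allI impI)
    fix i assume i: "i < length (replicate k0 1 @ q)"
    have s: "1 + sum_list (replicate k0 1 @ q) = L * T" using k0T by (simp add: sum_list_replicate)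
    show "(replicate k0 1 @ q) ! i dvd 1 + sum_list (replicate k0 1 @ q)"
    proof (cases "i < k0")
      case True then show ?thesis by (simp add: nth_append)
    next
      case False
      then have "(replicate k0 1 @ q) ! i = q ! (i - k0)" by (simp add: nth_append)
      moreover have "q ! (i - k0) \<in> set q" using i False by simp
      ultimately show ?thesis using s dvdL by (metis dvd_mult2)
    qed
  qed
  define r where "r = rsn q"
  have refl: "reflexive_vec (replicate r 1 @ q)"
    unfolding r_def rsn_def by (rule LeastI_ex) (use ex in blast)
  have "(replicate r 1 @ q) ! r dvd 1 + sum_list (replicate r 1 @ q)"
    using refl assms(1) unfolding reflexive_vec_def by simp
  then have d1: "hd q dvd 1 + r + sum_list q"
    using assms(1) by (simp add: nth_append sum_list_replicate hd_conv_nth)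
  define k where "k = r + (m - 1) * L"
  have "hd q dvd (1 + r + sum_list q) + (m - 1) * L"
    by (rule dvd_add[OF d1 dvd_mult[OF dvdL[OF hdin]]])
  then have dk: "hd q dvd 1 + k + sum_list q" by (simp add: k_def algebra_simps)
  have "1 \<le> m - 1" using assms(3) by simp
  then have "1 * L \<le> (m - 1) * L" by (rule mult_right_mono) simp
  then have "L \<le> (m - 1) * L" by simp
  then have Qk: "hd q \<le> k" using hdL unfolding k_def by linarith
  have "rs q m = replicate k 1 @ q" by (simp add: rs_def k_def r_def L_def)
  then show ?thesis using nonIDP[OF assms(1) hd2 Qk dk] by simp
qed

end
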